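(* Let $n>5$ with $n\equiv 1\pmod 4$, and consider odd $r\in[3,n-4]$. Then $E(D_n^s[r,n-r-1])$ attains its maximum at $r=3$, and $$E(D_n^s[3,n-4])>E(D_n^s[5,n-6])>\dots>E\!\left(D_n^s\!\left[\tfrac{n-3}{2},\tfrac{n+1}{2}\right]\right),$$ the chain running over odd $r=3,5,7,\dots,\frac{n-3}{2}$.
   Context: A signed digraph (sidigraph) is a digraph in which every arc carries a sign $+1$ or $-1$; the energy of a sidigraph is the sum of the absolute values of the real parts of the eigenvalues of its signed adjacency matrix. For $k\ge 2$, $C_k$ denotes a directed cycle of length $k$ all of whose arc signs multiply to $+1$. It is known that for odd $k$, $E(C_k)=\csc\frac{\pi}{2k}$ (and the same holds for a negative cycle of odd length). For integers $p,q\ge2$ with $p+q\le n$, $D_n^s[p,q]$ denotes an $n$-vertex sidigraph whose only directed cycles are two vertex-disjoint positive cycles $C_p$ and $C_q$ (other vertices lie on no directed cycle); its energy is $E(C_p)+E(C_q)$. *)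

theory Defs
  imports Complex_Main
begin

text \<open>A positive directed cycle C_k (product of arc signs = +1) has signed adjacency
matrix with characteristic polynomial x^k - 1, so its eigenvalues are the k-th roots
of unity exp(2 pi i j / k), j = 0..k-1, each simple.\<close>

definition cycle_energy :: "nat \<Rightarrow> real" where
  "cycle_energy k = (\<Sum>j<k. \<bar>Re (cis (2 * pi * real j / real k))\<bar>)"

text \<open>Energy of D_n^s[p,q]: the sidigraph whose only directed cycles are two
vertex-disjoint positive cycles C_p and C_q; its energy is E(C_p) + E(C_q).
(The parameter n is the number of vertices; it does not affect the energy.)\<close>

definition D_energy :: "nat \<Rightarrow> nat \<Rightarrow> nat \<Rightarrow> real" where
  "D_energy n p q = cycle_energy p + cycle_energy q"

end

theory Submission
  imports Defs
begin


lemma sin_taylor_ub: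
  fixes u :: real assumes "0 \<le> u"
  shows "sin u \<le> u - u^3/6 + u^5/120 + u^7/5040"
proof -
  have "\<bar>sin u - (\<Sum>m<7. sin_coeff m * u ^ m)\<bar> \<le> inverse (fact 7) * \<bar>u\<bar> ^ 7"
    by (rule Maclaurin_sin_bound)
  moreover have "(\<Sum>m<7. sin_coeff m * u ^ m) = u - u^3/6 + u^5/120"
    by (simp add: lessThan_nat_numeral sin_coeff_def fact_numeral field_simps)
  moreover have "inverse (fact 7) * \<bar>u\<bar> ^ 7 = u^7/5040"
    using assms by (simp add: fact_numeral eval_nat_numeral field_simps)
  ultimately show ?thesis by linarith
qed

lemma cos_lb:
  fixes u :: real shows "1 - u^2/2 \<le> cos u"
proof -
  have "cos u = 1 - 2 * sin (u/2)^2" using cos_double_sin[of "u/2"] by simp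
  moreover have "sin (u/2)^2 \<le> (u/2)^2"
    using abs_sin_x_le_abs_x[of "u/2"] by (metis abs_ge_zero power_mono abs_power2 power2_abs)
  ultimately show ?thesis by (simp add: power2_eq_square)
qed

lemma key_ineq:
  fixes u :: real assumes "0 < u" "u \<le> 4/3"
  shows "4 * sin u < u * (3 + cos u)"
proof -
  have s: "sin u \<le> u - u^3/6 + u^5/120 + u^7/5040" using sin_taylor_ub assms by simp
  have c: "1 - u^2/2 \<le> cos u" by (rule cos_lb)
  have v: "u^2 \<le> 16/9" proof -
    have "u*u \<le> (4/3)*(4/3)" using assms by (intro mult_mono) auto
    thus ?thesis by (simp add: power2_eq_square)
  qed
  have v2: "u^4 \<le> (16/9)^2" using power_mono[OF v, of 2] by (simp add: power_mult[symmetric])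
  have p: "0 < 1/6 - u^2/30 - u^4/1260" using v v2 by (simp add: power2_eq_square)
  have "0 < u^3 * (1/6 - u^2/30 - u^4/1260)" using p assms by simp
  also have "u^3 * (1/6 - u^2/30 - u^4/1260) = u*(4 - u^2/2) - 4*(u - u^3/6 + u^5/120 + u^7/5040)"
    by (simp add: algebra_simps eval_nat_numeral)
  also have "... \<le> u*(3 + cos u) - 4 * sin u" using s c assms
    by (smt (verit) mult_left_mono)
  finally show ?thesis by simp
qed


definition K :: "real \<Rightarrow> real" where "K t = t^2 * cos t / (sin t)^2"
definition F :: "real \<Rightarrow> real" where "F x = 1 / sin (pi / (2*x))"

lemma K_deriv:
  assumes "0 < t" "t \<le> 2/3"
  shows "\<exists>y. (K has_real_derivative y) (at t) \<and> y < 0"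
proof -
  have pi4: "pi < 4" by (rule pi_less_4)
  have sp: "sin t > 0" using assms pi_ge_two by (intro sin_gt_zero) auto
  let ?y = "((2*t*cos t - t^2*sin t)*(sin t)^2 - t^2*cos t*(2*sin t*cos t))/((sin t)^2)^2"
  have d: "(K has_real_derivative ?y) (at t)"
    unfolding K_def[abs_def] using sp
    by (auto intro!: derivative_eq_intros simp: power2_eq_square)
  have ki: "4 * sin (2*t) < (2*t) * (3 + cos (2*t))" using assms by (intro key_ineq) auto
  have num: "(2*t*cos t - t^2*sin t)*(sin t)^2 - t^2*cos t*(2*sin t*cos t)
      = t * sin t * ((4 * sin (2*t) - (2*t) * (3 + cos (2*t)))/4)"
  proof -
    have id: "\<And>s c::real. (2*t*c - t^2*s)*s^2 - t^2*c*(2*s*c)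
       = t*s*((4*(2*s*c) - (2*t)*(3 + (c^2 - s^2)))/4) + 3/2*t^2*s*(1 - s^2 - c^2)"
      by (simp add: field_simps power2_eq_square)
    have "1 - (sin t)^2 - (cos t)^2 = 0" using sin_cos_squared_add[of t] by linarith
    then show ?thesis using id[of "cos t" "sin t"] by (simp add: sin_double cos_double)
  qed
  have "?y < 0" unfolding num using ki sp assms
    by (intro divide_neg_pos mult_pos_neg) auto
  with d show ?thesis by blast
qed

lemma F_deriv:
  assumes "1 \<le> x"
  shows "(F has_real_derivative (2/pi) * K (pi/(2*x))) (at x)"
proof -
  have pi4: "pi < 4" by (rule pi_less_4)
  have t: "0 < pi/(2*x)" "pi/(2*x) < pi" using assms pi_gt_zero by (auto simp: field_simps)
  have sp: "sin (pi/(2*x)) > 0" using t by (intro sin_gt_zero) auto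
  have "(F has_real_derivative (- (cos (pi/(2*x)) * (- (pi * 2) / (2*x)^2)) / (sin (pi/(2*x)))^2)) (at x)"
    unfolding F_def[abs_def] using sp assms
    by (auto intro!: derivative_eq_intros simp: power2_eq_square)
  moreover have "- (cos (pi/(2*x)) * (- (pi * 2) / (2*x)^2)) / (sin (pi/(2*x)))^2 = (2/pi) * K (pi/(2*x))"
    unfolding K_def using assms by (simp add: field_simps power2_eq_square)
  ultimately show ?thesis by simp
qed



lemma Fp_mono:
  assumes "3 \<le> x" "x < y"
  shows "(2/pi)*K(pi/(2*x)) < (2/pi)*K(pi/(2*y))"
proof -
  have pi4: "pi < 4" by (rule pi_less_4)
  have ab: "pi/(2*y) < pi/(2*x)" using assms pi_gt_zero by (simp add: field_simps)
  have b: "pi/(2*x) \<le> 2/3" using assms pi4 by (simp add: field_simps)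
  have "K (pi/(2*y)) > K (pi/(2*x))"
  proof (rule DERIV_neg_imp_decreasing[OF ab])
    fix t assume "pi/(2*y) \<le> t" "t \<le> pi/(2*x)"
    moreover have "0 < pi/(2*y)" using assms pi_gt_zero by simp
    ultimately show "\<exists>d. (K has_real_derivative d) (at t) \<and> d < 0" using b by (intro K_deriv) auto
  qed
  thus ?thesis using pi_gt_zero by (intro mult_strict_left_mono) auto
qed

lemma F_step:
  assumes "3 \<le> a" "a + 2 \<le> b - 2"
  shows "F (a+2) + F (b-2) < F a + F b"
proof -
  define G where "G x = (2/pi)*K(pi/(2*x))" for x
  obtain z1 where z1: "a < z1" "z1 < a+2" "F (a+2) - F a = (a+2-a) * G z1"
    using MVT2[of a "a+2" F G] F_deriv assms unfolding G_def by force
  obtain z2 where z2: "b-2 < z2" "z2 < b" "F b - F (b-2) = (b-(b-2)) * G z2"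
    using MVT2[of "b-2" b F G] F_deriv assms unfolding G_def by force
  have "G z1 < G z2" unfolding G_def using z1 z2 assms by (intro Fp_mono) auto
  thus ?thesis using z1 z2 by simp
qed



lemma tele:
  fixes \<theta> :: real
  shows "2*sin(\<theta>/2) * (\<Sum>i<N. cos(real i*\<theta>)) = sin((2*real N - 1)*\<theta>/2) + sin(\<theta>/2)"
proof (induction N)
  case 0 then show ?case by simp
next
  case (Suc N)
  have e1: "(2*real (Suc N) - 1)*\<theta>/2 = real N*\<theta> + \<theta>/2" by (simp add: field_simps)
  have e2: "(2*real N - 1)*\<theta>/2 = real N*\<theta> - \<theta>/2" by (simp add: field_simps)
  have "2*sin(\<theta>/2) * (\<Sum>i<Suc N. cos(real i*\<theta>)) = 2*sin(\<theta>/2) * (\<Sum>i<N. cos(real i*\<theta>)) + 2*sin(\<theta>/2)*cos(real N*\<theta>)"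
    by (simp add: algebra_simps)
  also have "... = sin(real N*\<theta> - \<theta>/2) + sin(\<theta>/2) + 2*sin(\<theta>/2)*cos(real N*\<theta>)"
    using Suc e2 by simp
  also have "... = sin(real N*\<theta> + \<theta>/2) + sin(\<theta>/2)"
    by (simp add: sin_add sin_diff algebra_simps)
  finally show ?case by (simp only: e1)
qed

lemma inj2:
  fixes k :: nat
  assumes "odd k" shows "inj_on (\<lambda>j. 2*j mod k) {..<k}"
proof (rule inj_onI)
  fix i j assume ij: "i \<in> {..<k}" "j \<in> {..<k}" "2*i mod k = 2*j mod k"
  have cop: "coprime k 2" using assms by simp
  have "\<And>a b. a < k \<Longrightarrow> b < k \<Longrightarrow> b \<le> a \<Longrightarrow> 2*a mod k = 2*b mod k \<Longrightarrow> a = b"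
  proof -
    fix a b assume h: "a < k" "b < k" "b \<le> a" "2*a mod k = 2*b mod k"
    have "k dvd (2*a - 2*b)" using h mod_eq_dvd_iff_nat by (metis mult_le_mono2)
    hence "k dvd 2*(a - b)" by (simp add: diff_mult_distrib2)
    hence "k dvd (a - b)" using cop by (simp add: coprime_dvd_mult_right_iff)
    moreover have "a - b < k" using h by simp
    ultimately have "a - b = 0" using dvd_imp_le by (metis gr0I leD)
    thus "a = b" using h by simp
  qed
  then show "i = j" using ij by (metis lessThan_iff nat_le_linear)
qed

lemma abs_cos_shift: "\<bar>cos (x + real q * pi)\<bar> = \<bar>cos x\<bar>"
  by (simp add: cos_add abs_mult)

lemma cycle_energy_odd:
  assumes "odd k"
  shows "cycle_energy k = 1 / sin (pi / (2 * real k))"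
proof -
  obtain p where kp: "k = 2*p+1" using assms oddE by blast
  define h where "h i = \<bar>cos (pi * real i / real k)\<bar>" for i :: nat
  have kpos: "real k > 0" using kp by simp
  have tm: "\<bar>Re (cis (2 * pi * real j / real k))\<bar> = h (2*j mod k)" for j
  proof -
    have "2*j = k * (2*j div k) + 2*j mod k" by simp
    hence "real (2*j) = real k * real (2*j div k) + real (2*j mod k)" by (metis of_nat_add of_nat_mult)
    hence "2 * pi * real j / real k = pi * real (2*j mod k) / real k + real (2*j div k) * pi"
      using kpos by (simp add: field_simps)
    thus ?thesis unfolding h_def by (simp add: abs_cos_shift)
  qed
  have bij: "bij_betw (\<lambda>j. 2*j mod k) {..<k} {..<k}"
  proof -
    have "(\<lambda>j. 2*j mod k) ` {..<k} \<subseteq> {..<k}" using kp by auto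
    thus ?thesis unfolding bij_betw_def using inj2[OF assms] endo_inj_surj[of "{..<k}" "\<lambda>j. 2*j mod k"] by auto
  qed
  have s1: "cycle_energy k = (\<Sum>i<k. h i)"
    unfolding cycle_energy_def tm using sum.reindex_bij_betw[OF bij, of h] by simp
  define \<theta> where "\<theta> = pi / real k"
  define c where "c i = cos (real i * \<theta>)" for i :: nat
  have hc: "h i = \<bar>c i\<bar>" for i unfolding h_def c_def \<theta>_def by (simp add: field_simps)
  have pos: "c i \<ge> 0" if "i < p+1" for i
  proof -
    have "real i * 2 \<le> 1 + real p * 2" using that by simp
    hence "pi * (real i * 2) \<le> pi * (1 + real p * 2)" using pi_gt_zero by (intro mult_left_mono) auto
    hence "real i * \<theta> \<le> pi/2" using that kp unfolding \<theta>_def by (simp add: field_simps)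
    moreover have "real i * \<theta> \<ge> 0" unfolding \<theta>_def using kpos by simp
    ultimately show ?thesis unfolding c_def by (intro cos_ge_zero) auto
  qed
  have neg: "c i \<le> 0" if "p+1 \<le> i" "i < k" for i
  proof -
    have "1 + real p * 2 \<le> real i * 2" using that by simp
    hence "pi * (1 + real p * 2) \<le> pi * (real i * 2)" using pi_gt_zero by (intro mult_left_mono) auto
    hence "real i * \<theta> \<ge> pi/2" using that kp unfolding \<theta>_def by (simp add: field_simps)
    moreover have "real i \<le> 1 + real p * 2" using that kp by simp
    hence "pi * real i \<le> pi * (1 + real p * 2)" using pi_gt_zero by (intro mult_left_mono) auto
    hence "real i * \<theta> \<le> pi" using that kp kpos unfolding \<theta>_def by (simp add: field_simps)
    ultimately have "0 \<le> cos (pi - real i * \<theta>)" by (intro cos_ge_zero) auto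
    thus ?thesis unfolding c_def by simp
  qed
  have split: "(\<Sum>i<k. g i) = (\<Sum>i<p+1. g i) + (\<Sum>i\<in>{p+1..<k}. g i)" for g :: "nat \<Rightarrow> real"
  proof -
    have "{..<k} = {..<p+1} \<union> {p+1..<k}" using kp by auto
    moreover have "(\<Sum>i\<in>{..<p+1} \<union> {p+1..<k}. g i) = (\<Sum>i<p+1. g i) + (\<Sum>i\<in>{p+1..<k}. g i)"
      by (rule sum.union_disjoint) auto
    ultimately show ?thesis by simp
  qed
  have s2: "(\<Sum>i<k. h i) = 2 * (\<Sum>i<p+1. c i) - (\<Sum>i<k. c i)"
  proof -
    have "(\<Sum>i<k. h i) = (\<Sum>i<p+1. c i) + (\<Sum>i\<in>{p+1..<k}. - c i)"
      unfolding hc split[of "\<lambda>i. \<bar>c i\<bar>"] using pos neg by (intro arg_cong2[where f="(+)"] sum.cong) auto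
    also have "... = 2 * (\<Sum>i<p+1. c i) - (\<Sum>i<k. c i)" unfolding split[of c] by (simp add: sum_negf)
    finally show ?thesis .
  qed
  have t1: "2*sin(\<theta>/2) * (\<Sum>i<p+1. c i) = 1 + sin(\<theta>/2)"
  proof -
    have "(2*real (p+1) - 1)*\<theta>/2 = pi/2" unfolding \<theta>_def using kp by (simp add: field_simps)
    thus ?thesis using tele[of \<theta> "p+1"] unfolding c_def by simp
  qed
  have t2: "2*sin(\<theta>/2) * (\<Sum>i<k. c i) = 2 * sin(\<theta>/2)"
  proof -
    have "(2*real k - 1)*\<theta>/2 = pi - \<theta>/2" unfolding \<theta>_def using kpos by (simp add: field_simps)
    moreover have "sin (pi - \<theta>/2) = sin (\<theta>/2)" by simp
    ultimately show ?thesis using tele[of \<theta> k] unfolding c_def by (simp only:)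
  qed
  have th1: "0 < \<theta>/2" unfolding \<theta>_def using kpos pi_gt_zero by simp
  have "\<theta> \<le> pi" unfolding \<theta>_def using kp pi_gt_zero by (simp add: divide_le_eq)
  hence th2: "\<theta>/2 < pi" using th1 by simp
  have sp: "sin (\<theta>/2) > 0" using th1 th2 by (intro sin_gt_zero) auto
  have ce: "cycle_energy k = 2 * (\<Sum>i<p+1. c i) - (\<Sum>i<k. c i)" using s1 s2 by simp
  have "2*sin(\<theta>/2) * cycle_energy k = 2 * (2*sin(\<theta>/2) * (\<Sum>i<p+1. c i)) - 2*sin(\<theta>/2) * (\<Sum>i<k. c i)"
    unfolding ce by (simp add: algebra_simps)
  also have "... = 2" unfolding t1 t2 by simp
  finally have "2*sin(\<theta>/2) * cycle_energy k = 2" .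
  hence "cycle_energy k = 1 / sin (\<theta>/2)" using sp by (simp add: field_simps)
  thus ?thesis unfolding \<theta>_def by (simp add: field_simps)
qed



lemma ce_F: "odd k \<Longrightarrow> cycle_energy k = F (real k)"
  unfolding F_def by (simp add: cycle_energy_odd)

lemma step_nat:
  assumes "odd n" "odd r" "3 \<le> r" "2*r + 7 \<le> n"
  shows "D_energy n (r + 2) (n - (r + 2) - 1) < D_energy n r (n - r - 1)"
proof -
  have o1: "odd (n - r - 1)" "odd (n - (r+2) - 1)" "odd (r+2)" using assms by presburger+
  have e: "real (n - (r+2) - 1) = real (n - r - 1) - 2" using assms by (simp add: of_nat_diff)
  have "F (real r + 2) + F (real (n - r - 1) - 2) < F (real r) + F (real (n - r - 1))"
    using assms by (intro F_step) (auto simp: of_nat_diff)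
  moreover have "real n - real r - 3 = real n - (real r + 3)" by simp
  ultimately show ?thesis unfolding D_energy_def using o1 assms
    by (simp add: ce_F e add.commute)
qed

theorem lemma3p16:
  fixes n :: nat
  assumes "n > 5" and "n mod 4 = 1"
  shows "(\<forall>r. odd r \<and> 3 \<le> r \<and> r \<le> n - 4 \<longrightarrow>
            D_energy n r (n - r - 1) \<le> D_energy n 3 (n - 4))
       \<and> (\<forall>r. odd r \<and> 3 \<le> r \<and> r + 2 \<le> (n - 3) div 2 \<longrightarrow>
            D_energy n (r + 2) (n - (r + 2) - 1) < D_energy n r (n - r - 1))"
proof -
  have on: "odd n" using assms(2) by presburger
  have chain: "\<forall>r. odd r \<and> 3 \<le> r \<and> r + 2 \<le> (n - 3) div 2 \<longrightarrow>
            D_energy n (r + 2) (n - (r + 2) - 1) < D_energy n r (n - r - 1)"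
  proof (intro allI impI)
    fix r assume h: "odd r \<and> 3 \<le> r \<and> r + 2 \<le> (n - 3) div 2"
    hence "2*r + 7 \<le> n" by linarith
    thus "D_energy n (r + 2) (n - (r + 2) - 1) < D_energy n r (n - r - 1)"
      using step_nat[OF on] h by blast
  qed
  have A: "3 + 2*j \<le> (n - 3) div 2 \<longrightarrow> D_energy n (3+2*j) (n - (3+2*j) - 1) \<le> D_energy n 3 (n - 4)" for j
  proof (induction j)
    case 0 then show ?case by (simp add: numeral_eq_Suc)
  next
    case (Suc j)
    show ?case
    proof
      assume h: "3 + 2 * Suc j \<le> (n - 3) div 2"
      have "D_energy n (3 + 2*j + 2) (n - (3 + 2*j + 2) - 1) < D_energy n (3+2*j) (n - (3+2*j) - 1)"
      proof -
        have X: "odd (3+2*j) \<and> 3 \<le> 3+2*j \<and> 3+2*j+2 \<le> (n-3) div 2" using h by auto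
        from chain X show ?thesis by blast
      qed
      moreover have "D_energy n (3+2*j) (n - (3+2*j) - 1) \<le> D_energy n 3 (n - 4)" using Suc h by auto
      moreover have "3 + 2 * Suc j = 3 + 2*j + 2" by simp
      ultimately show "D_energy n (3 + 2 * Suc j) (n - (3 + 2 * Suc j) - 1) \<le> D_energy n 3 (n - 4)"
        by simp
    qed
  qed
  have B: "D_energy n r (n - r - 1) \<le> D_energy n 3 (n - 4)" if h: "odd r" "3 \<le> r" "r \<le> n - 4" for r
  proof (cases "r \<le> (n - 3) div 2")
    case True
    have "\<exists>j. r = 3 + 2*j" using h by presburger
    then obtain j where "r = 3 + 2*j" by blast
    then show ?thesis using A True by auto
  next
    case False
    define r' where "r' = n - r - 1"
    have r': "odd r'" "3 \<le> r'" "r' \<le> (n - 3) div 2" "n - r' - 1 = r"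
      unfolding r'_def using h False assms by presburger+
    have "\<exists>j. r' = 3 + 2*j" using r' by presburger
    then obtain j where "r' = 3 + 2*j" by blast
    hence "D_energy n r' (n - r' - 1) \<le> D_energy n 3 (n - 4)" using A r' by auto
    thus ?thesis using r' unfolding r'_def D_energy_def by (simp add: add.commute)
  qed
  show ?thesis using B chain by blast
qed

end
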